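(* Let $\varsigma=(\varsigma_1,\dots,\varsigma_K)\in\Gamma(\mathscr M_1)\oplus\dots\oplus\Gamma(\mathscr M_K)$ have the boundary decomposition property, and let $0\le m<r_K$. Suppose that every $\varsigma_k$ has an $m$-th subdiagonal matrix representation. Then there is a continuous section $G\in\Gamma(\mathscr V^{(m)})$ such that \[G|_{\alpha^i(\overline{Y_k})}=\varsigma_k^{(i)}\circ\alpha^{-i}|_{\alpha^i(\overline{Y_k})}\quad\text{for all }1\le k\le K,\ 0\le i\le r_k-1,\] and, provided $m\ge 1$, $G$ vanishes on $\alpha^{-m}(Y)\cup\alpha^{-m+1}(Y)\cup\dots\cup\alpha^{-1}(Y)$.
   Context: Let $X$ be an infinite compact metric space, $\alpha:X\to X$ a minimal homeomorphism, $\mathscr V$ a Hermitian complex line bundle over $X$, and $Y\subset X$ closed with non-empty interior. For $y\in Y$ let $r_Y(y)=\min\{n\ge1:\alpha^n(y)\in Y\}$, with distinct values $r_1<\dots<r_K$, and $Y_k=\{y\in Y:r_Y(y)=r_k\}$. Let $\mathscr V^{(0)}=X\times\mathbb C$ and $\mathscr V^{(n)}=(\alpha^{n-1})^*\mathscr V\otimes\cdots\otimes\alpha^*\mathscr V\otimes\mathscr V$, so $\mathscr V^{(n)}_x=\mathscr V_{\alpha^{n-1}(x)}\otimes\cdots\otimes\mathscr V_x=\mathscr V^{(n-m)}_{\alpha^m(x)}\otimes\mathscr V^{(m)}_x$ for $0\le m\le n$; $\Gamma(\mathscr V^{(m)})$ is its space of continuous sections. Let $\mathscr D^{(n)}=\mathscr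 V^{(0)}\oplus\cdots\oplus\mathscr V^{(n-1)}$, $\mathscr M_k=\mathrm{End}(\mathscr D^{(r_k)})|_{\overline{Y_k}}$ and $\Gamma(\mathscr M_k)$ its continuous sections. $\varsigma_k\in\Gamma(\mathscr M_k)$ has an $m$-th (lower) subdiagonal matrix representation if for every $x\in\overline{Y_k}$, $\varsigma_k(x)$ maps $\mathscr V^{(i)}_x$ into $\mathscr V^{(i+m)}_x$ for $i<r_k-m$ and maps $\mathscr V^{(i)}_x$ to $0$ for $r_k-m\le i<r_k$ (so $\varsigma_k=0$ if $m\ge r_k$). In that case, since all these spaces are one-dimensional, for $i<r_k-m$ there is a unique $\varsigma_k^{(i)}(x)\in\mathscr V^{(m)}_{\alpha^i(x)}$ with $\varsigma_k(x)v=\varsigma_k^{(i)}(x)\otimes v$ for $v\in\mathscr V^{(i)}_x$ (using $\mathscr V^{(i+m)}_x=\mathscr V^{(m)}_{\alpha^i(x)}\otimes\mathscr V^{(i)}_x$), and $\varsigma_k^{(i)}(x):=0$ for $r_k-m\le i\le r_k-1$. Boundary decomposition property: $\varsigma=(\varsigma_1,\dots,\varsigma_K)$ has it if for every $k$ and every $x\in\overline{Y_k}\setminus Y_k$ the following holds. There are indices $t_1,\dots,t_m<k$ with $r_{t_1}+\dots+r_{t_m}=r_k$ and $x\in Y_{t_1}\cap\alpha^{-r_{t_1}}(Y_{t_2})\cap\dots\cap\alpha^{-(r_{t_1}+\dots+r_{t_{m-1}})}(Y_{t_m})$. Let $R_0=0$, $R_s=r_{t_1}+\dots+r_{t_s}$,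 and identify the $s$-th component $\mathscr V^{(R_{s-1})}_x\oplus\dots\oplus\mathscr V^{(R_s-1)}_x$ of $\mathscr D^{(r_k)}_x$ with $\mathscr D^{(r_{t_s})}_{\alpha^{R_{s-1}}(x)}\otimes\mathscr V^{(R_{s-1})}_x$. The requirement is that $\varsigma_k(x)$ restricted to the $s$-th component equals $\varsigma_{t_s}(\alpha^{R_{s-1}}(x))\otimes\mathrm{id}_{\mathscr V^{(R_{s-1})}_x}$ for every $s$. *)

theory Defs
  imports "HOL-Analysis.Analysis"
begin

text \<open>The space X is the (compact metric) type 'a. A Hermitian line bundle V over X
is modelled as a continuous line subbundle L of a trivial bundle X \<times> ('n \<Rightarrow> complex), 'n finite,
with the induced Hermitian metric. Fibres of V^(n) are lines inside 'n list \<Rightarrow> complex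
(supported on lists of length n), built as iterated tensor products.\<close>

definition minimal_homeo :: "('a::topological_space \<Rightarrow> 'a) \<Rightarrow> bool" where
  "minimal_homeo \<alpha> \<longleftrightarrow> bij \<alpha> \<and> continuous_on UNIV \<alpha> \<and> continuous_on UNIV (inv \<alpha>) \<and>
     (\<forall>C. closed C \<and> \<alpha> ` C = C \<longrightarrow> C = {} \<or> C = UNIV)"

definition line_bundle :: "('a::topological_space \<Rightarrow> ('n \<Rightarrow> complex) set) \<Rightarrow> bool" where
  "line_bundle L \<longleftrightarrow> (\<forall>x. \<exists>U s. open U \<and> x \<in> U \<and> (\<forall>i. continuous_on U (\<lambda>y. s y i)) \<and>
      (\<forall>y\<in>U. s y \<noteq> (\<lambda>i. 0) \<and> L y = {(\<lambda>i. c * s y i) | c. True}))"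

definition lift1 :: "('n \<Rightarrow> complex) \<Rightarrow> ('n list \<Rightarrow> complex)" where
  "lift1 w l = (case l of [a] \<Rightarrow> w a | _ \<Rightarrow> 0)"

text \<open>tens k w v: the element w \<otimes> v, where v lies in a fibre of V^(k) at x and w in a fibre
at alpha^k x; realises V^(k+j)_x = V^(j)_(alpha^k x) \<otimes> V^(k)_x.\<close>
definition tens :: "nat \<Rightarrow> ('n list \<Rightarrow> complex) \<Rightarrow> ('n list \<Rightarrow> complex) \<Rightarrow> ('n list \<Rightarrow> complex)" where
  "tens k w v l = w (drop k l) * v (take k l)"

fun fib :: "('a \<Rightarrow> 'a) \<Rightarrow> ('a \<Rightarrow> ('n \<Rightarrow> complex) set) \<Rightarrow> nat \<Rightarrow> 'a \<Rightarrow> ('n list \<Rightarrow> complex) set" where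
  "fib \<alpha> L 0 x = {(\<lambda>l. if l = [] then c else 0) | c. True}"
| "fib \<alpha> L (Suc n) x = {tens n (lift1 w) v | w v. w \<in> L ((\<alpha> ^^ n) x) \<and> v \<in> fib \<alpha> L n x}"

text \<open>Fibre of D^(n) = V^(0) \<oplus> ... \<oplus> V^(n-1) (components have disjoint supports).\<close>
definition Dfib :: "('a \<Rightarrow> 'a) \<Rightarrow> ('a \<Rightarrow> ('n \<Rightarrow> complex) set) \<Rightarrow> nat \<Rightarrow> 'a \<Rightarrow> ('n list \<Rightarrow> complex) set" where
  "Dfib \<alpha> L n x = {v. (\<forall>l. n \<le> length l \<longrightarrow> v l = 0) \<and>
      (\<forall>j<n. (\<lambda>l. if length l = j then v l else 0) \<in> fib \<alpha> L j x)}"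

text \<open>Continuity of a section (product topology = coordinatewise).\<close>
definition cont_sec :: "'a::topological_space set \<Rightarrow> ('a \<Rightarrow> ('n list \<Rightarrow> complex)) \<Rightarrow> bool" where
  "cont_sec S G \<longleftrightarrow> (\<forall>l. continuous_on S (\<lambda>x. G x l))"

definition End_section :: "('a::topological_space \<Rightarrow> 'a) \<Rightarrow> ('a \<Rightarrow> ('n \<Rightarrow> complex) set) \<Rightarrow> nat \<Rightarrow> 'a set
     \<Rightarrow> ('a \<Rightarrow> ('n list \<Rightarrow> complex) \<Rightarrow> ('n list \<Rightarrow> complex)) \<Rightarrow> bool" where
  "End_section \<alpha> L n S \<sigma> \<longleftrightarrow>
     (\<forall>x\<in>S. (\<forall>u\<in>Dfib \<alpha> L n x. \<sigma> x u \<in> Dfib \<alpha> L n x) \<and>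
        (\<forall>u\<in>Dfib \<alpha> L n x. \<forall>v\<in>Dfib \<alpha> L n x. \<forall>c.
            \<sigma> x (\<lambda>l. c * u l + v l) = (\<lambda>l. c * \<sigma> x u l + \<sigma> x v l))) \<and>
     (\<forall>v. cont_sec S v \<and> (\<forall>y\<in>S. v y \<in> Dfib \<alpha> L n y) \<longrightarrow> cont_sec S (\<lambda>y. \<sigma> y (v y)))"

definition subdiag :: "('a \<Rightarrow> 'a) \<Rightarrow> ('a \<Rightarrow> ('n \<Rightarrow> complex) set) \<Rightarrow> nat \<Rightarrow> nat \<Rightarrow> 'a set
     \<Rightarrow> ('a \<Rightarrow> ('n list \<Rightarrow> complex) \<Rightarrow> ('n list \<Rightarrow> complex)) \<Rightarrow> bool" where
  "subdiag \<alpha> L r m S \<sigma> \<longleftrightarrow> (\<forall>x\<in>S. \<forall>i<r. \<forall>v\<in>fib \<alpha> L i x.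
      (if i + m < r then \<sigma> x v \<in> fib \<alpha> L (i + m) x else \<sigma> x v = (\<lambda>l. 0)))"

definition coef :: "('a \<Rightarrow> 'a) \<Rightarrow> ('a \<Rightarrow> ('n \<Rightarrow> complex) set) \<Rightarrow> nat \<Rightarrow> nat
     \<Rightarrow> ('a \<Rightarrow> ('n list \<Rightarrow> complex) \<Rightarrow> ('n list \<Rightarrow> complex)) \<Rightarrow> nat \<Rightarrow> 'a \<Rightarrow> ('n list \<Rightarrow> complex)" where
  "coef \<alpha> L r m \<sigma> i x = (if i + m < r then
      (THE w. w \<in> fib \<alpha> L m ((\<alpha> ^^ i) x) \<and> (\<forall>v\<in>fib \<alpha> L i x. \<sigma> x v = tens i w v))
     else (\<lambda>l. 0))"

definition rY :: "('a \<Rightarrow> 'a) \<Rightarrow> 'a set \<Rightarrow> 'a \<Rightarrow> nat" where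
  "rY \<alpha> Y y = (LEAST n. 1 \<le> n \<and> (\<alpha> ^^ n) y \<in> Y)"

text \<open>The set of return times {r_1 < ... < r_K}; sets Y_k are indexed by the value r_k.\<close>
definition Rset :: "('a \<Rightarrow> 'a) \<Rightarrow> 'a set \<Rightarrow> nat set" where
  "Rset \<alpha> Y = rY \<alpha> Y ` Y"

definition Ysub :: "('a \<Rightarrow> 'a) \<Rightarrow> 'a set \<Rightarrow> nat \<Rightarrow> 'a set" where
  "Ysub \<alpha> Y n = {y \<in> Y. rY \<alpha> Y y = n}"

definition bdp :: "('a::topological_space \<Rightarrow> 'a) \<Rightarrow> ('a \<Rightarrow> ('n \<Rightarrow> complex) set) \<Rightarrow> 'a set
     \<Rightarrow> (nat \<Rightarrow> 'a \<Rightarrow> ('n list \<Rightarrow> complex) \<Rightarrow> ('n list \<Rightarrow> complex)) \<Rightarrow> bool" where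
  "bdp \<alpha> L Y \<sigma> \<longleftrightarrow> (\<forall>n\<in>Rset \<alpha> Y. \<forall>x \<in> closure (Ysub \<alpha> Y n) - Ysub \<alpha> Y n.
     \<exists>ts. set ts \<subseteq> Rset \<alpha> Y \<and> (\<forall>t\<in>set ts. t < n) \<and> sum_list ts = n \<and>
       (\<forall>s<length ts. (\<alpha> ^^ sum_list (take s ts)) x \<in> Ysub \<alpha> Y (ts ! s)) \<and>
       (\<forall>s<length ts. \<forall>u\<in>Dfib \<alpha> L (ts ! s) ((\<alpha> ^^ sum_list (take s ts)) x).
          \<forall>w\<in>fib \<alpha> L (sum_list (take s ts)) x.
            \<sigma> n x (tens (sum_list (take s ts)) u w) =
            tens (sum_list (take s ts)) (\<sigma> (ts ! s) ((\<alpha> ^^ sum_list (take s ts)) x) u) w))"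

end

theory Submission
  imports Defs
begin


lemma tens_assoc: "tens R (tens j a b) c = tens (R+j) a (tens R b c)"
  unfolding tens_def by (auto simp: fun_eq_iff take_drop drop_drop take_take add.commute)

lemma tens_assoc': "tens (R+j) a (tens R b c) = tens R (tens j a b) c"
  by (simp add: tens_assoc)

lemma lift1_scale: "lift1 (\<lambda>i. c * w i) = (\<lambda>l. c * lift1 w l)"
  by (auto simp: fun_eq_iff lift1_def split: list.split)

lemma lift1_nz: "lift1 w l \<noteq> 0 \<Longrightarrow> length l = 1"
  by (auto simp: lift1_def split: list.splits)

lemma tens_scale1: "tens k (\<lambda>l. c * w l) v = (\<lambda>l. c * tens k w v l)"
  by (simp add: tens_def fun_eq_iff)

lemma tens_scale2: "tens k w (\<lambda>l. c * v l) = (\<lambda>l. c * tens k w v l)"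
  by (simp add: tens_def fun_eq_iff)

lemma tens_zero1[simp]: "tens k (\<lambda>l. 0) v = (\<lambda>l. 0)"
  by (simp add: tens_def fun_eq_iff)

lemma tens_app: "length l0 = i \<Longrightarrow> tens i w v (l0 @ l) = w l * v l0"
  by (simp add: tens_def)

lemma fib_supp: "v \<in> fib \<alpha> L n x \<Longrightarrow> length l \<noteq> n \<Longrightarrow> v l = 0"
proof (induction n arbitrary: v l)
  case 0
  then show ?case by auto
next
  case (Suc n)
  then obtain w u where v: "v = tens n (lift1 w) u" and u: "u \<in> fib \<alpha> L n x" by auto
  show ?case
  proof (rule ccontr)
    assume "v l \<noteq> 0"
    hence a: "lift1 w (drop n l) \<noteq> 0" and b: "u (take n l) \<noteq> 0" by (auto simp: v tens_def)
    from a have "length (drop n l) = 1" by (rule lift1_nz)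
    moreover from b Suc.IH[OF u] have "length (take n l) = n" by blast
    ultimately show False using Suc.prems by simp
  qed
qed

definition sv :: "('a \<Rightarrow> ('n \<Rightarrow> complex) set) \<Rightarrow> 'a \<Rightarrow> ('n \<Rightarrow> complex)" where
  "sv L y = (SOME s. s \<noteq> (\<lambda>i. 0) \<and> L y = {(\<lambda>i. c * s i) | c. True})"

lemma sv_prop:
  assumes "line_bundle L"
  shows "sv L y \<noteq> (\<lambda>i. 0) \<and> L y = {(\<lambda>i. c * sv L y i) | c. True}"
proof -
  have "\<exists>U s. open U \<and> y \<in> U \<and> (\<forall>i. continuous_on U (\<lambda>y. s y i)) \<and>
      (\<forall>y\<in>U. s y \<noteq> (\<lambda>i. 0) \<and> L y = {(\<lambda>i. c * s y i) | c. True})"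
    using assms unfolding line_bundle_def by (rule spec)
  then obtain U s where U: "y \<in> U" and P: "\<forall>y\<in>U. s y \<noteq> (\<lambda>i. 0) \<and> L y = {(\<lambda>i. c * s y i) | c. True}"
    by (elim exE conjE)
  have "s y \<noteq> (\<lambda>i. 0) \<and> L y = {(\<lambda>i. c * s y i) | c. True}" using P U by (rule bspec)
  hence "\<exists>s. s \<noteq> (\<lambda>i. 0) \<and> L y = {(\<lambda>i. c * s i) | c. True}" by (rule exI[of _ "s y"])
  thus ?thesis unfolding sv_def by (rule someI_ex)
qed

primrec fr :: "('a \<Rightarrow> 'a) \<Rightarrow> ('a \<Rightarrow> ('n \<Rightarrow> complex) set) \<Rightarrow> nat \<Rightarrow> 'a \<Rightarrow> ('n list \<Rightarrow> complex)" where
  "fr \<alpha> L 0 x = (\<lambda>l. if l = [] then 1 else 0)"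
| "fr \<alpha> L (Suc n) x = tens n (lift1 (sv L ((\<alpha> ^^ n) x))) (fr \<alpha> L n x)"

lemma fib_fr:
  assumes "line_bundle L"
  shows "fib \<alpha> L n x = {(\<lambda>l. c * fr \<alpha> L n x l) | c. True}"
proof (induction n)
  case 0
  have eq: "(\<lambda>l. c * fr \<alpha> L 0 x l) = (\<lambda>l. if l = [] then c else 0)" for c
    by (simp add: fun_eq_iff)
  show ?case by (simp only: eq fib.simps)
next
  case (Suc n)
  let ?s = "sv L ((\<alpha> ^^ n) x)"
  have L: "L ((\<alpha> ^^ n) x) = {(\<lambda>i. c * ?s i) | c. True}" using sv_prop[OF assms] by (rule conjunct2)
  show ?case
  proof (intro set_eqI iffI)
    fix v assume "v \<in> fib \<alpha> L (Suc n) x"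
    then obtain w u where v: "v = tens n (lift1 w) u" and w: "w \<in> L ((\<alpha> ^^ n) x)"
      and u: "u \<in> fib \<alpha> L n x" unfolding fib.simps by blast
    from w obtain c1 where c1: "w = (\<lambda>i. c1 * ?s i)" unfolding L by blast
    from u obtain c2 where c2: "u = (\<lambda>l. c2 * fr \<alpha> L n x l)" unfolding Suc by blast
    have "v = (\<lambda>l. (c1 * c2) * fr \<alpha> L (Suc n) x l)"
      by (simp add: v c1 c2 lift1_scale tens_scale1 tens_scale2 fun_eq_iff)
    thus "v \<in> {(\<lambda>l. c * fr \<alpha> L (Suc n) x l) | c. True}" by blast
  next
    fix v assume "v \<in> {(\<lambda>l. c * fr \<alpha> L (Suc n) x l) | c. True}"
    then obtain c where v: "v = (\<lambda>l. c * fr \<alpha> L (Suc n) x l)" by blast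
    have e: "v = tens n (lift1 (\<lambda>i. c * ?s i)) (\<lambda>l. 1 * fr \<alpha> L n x l)"
      by (simp add: v lift1_scale tens_scale1)
    have a: "(\<lambda>i. c * ?s i) \<in> L ((\<alpha> ^^ n) x)" unfolding L by blast
    have b: "(\<lambda>l. 1 * fr \<alpha> L n x l) \<in> fib \<alpha> L n x" unfolding Suc by blast
    show "v \<in> fib \<alpha> L (Suc n) x" unfolding fib.simps using e a b by blast
  qed
qed

lemma fr_in: "line_bundle L \<Longrightarrow> fr \<alpha> L n x \<in> fib \<alpha> L n x"
proof -
  assume a: "line_bundle L"
  have "fr \<alpha> L n x = (\<lambda>l. 1 * fr \<alpha> L n x l)" by simp
  thus ?thesis unfolding fib_fr[OF a] by blast
qed

lemma zero_in_fib: "line_bundle L \<Longrightarrow> (\<lambda>l. 0) \<in> fib \<alpha> L n x"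
proof -
  assume a: "line_bundle L"
  have "(\<lambda>l. 0::complex) = (\<lambda>l. 0 * fr \<alpha> L n x l)" by simp
  thus ?thesis unfolding fib_fr[OF a] by blast
qed

lemma fr_nz: "line_bundle L \<Longrightarrow> \<exists>l0. length l0 = n \<and> fr \<alpha> L n x l0 \<noteq> 0"
proof (induction n)
  case 0 thus ?case by auto
next
  case (Suc n)
  then obtain l0 where l0: "length l0 = n" "fr \<alpha> L n x l0 \<noteq> 0" by blast
  have "sv L ((\<alpha> ^^ n) x) \<noteq> (\<lambda>i. 0)" using sv_prop[OF Suc.prems] by (rule conjunct1)
  then obtain k where k: "sv L ((\<alpha> ^^ n) x) k \<noteq> 0" by auto
  have "fr \<alpha> L (Suc n) x (l0 @ [k]) = sv L ((\<alpha> ^^ n) x) k * fr \<alpha> L n x l0"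
    using l0 by (simp add: tens_def lift1_def)
  thus ?case using l0 k by (intro exI[of _ "l0 @ [k]"]) auto
qed

lemma fr_split: "line_bundle L \<Longrightarrow> fr \<alpha> L (i+m) x = tens i (fr \<alpha> L m ((\<alpha> ^^ i) x)) (fr \<alpha> L i x)"
proof (induction m)
  case 0
  have s: "fr \<alpha> L i x l = 0" if "length l \<noteq> i" for l
    using fib_supp[OF fr_in[OF 0]] that .
  show ?case
  proof (rule ext)
    fix l
    show "fr \<alpha> L (i + 0) x l = tens i (fr \<alpha> L 0 ((\<alpha> ^^ i) x)) (fr \<alpha> L i x) l"
    proof (cases "length l \<le> i")
      case True thus ?thesis by (simp add: tens_def)
    next
      case False thus ?thesis using s[of l] by (simp add: tens_def)
    qed
  qed
next
  case (Suc m)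
  have "fr \<alpha> L (i + Suc m) x = tens (i+m) (lift1 (sv L ((\<alpha> ^^ (i+m)) x))) (fr \<alpha> L (i+m) x)" by simp
  also have "\<dots> = tens i (tens m (lift1 (sv L ((\<alpha> ^^ (i+m)) x))) (fr \<alpha> L m ((\<alpha> ^^ i) x))) (fr \<alpha> L i x)"
    by (simp add: Suc tens_assoc')
  also have "(\<alpha> ^^ (i+m)) x = (\<alpha> ^^ m) ((\<alpha> ^^ i) x)" unfolding add.commute[of i m] funpow_add by simp
  finally show ?case by simp
qed

lemma fib_split:
  assumes "line_bundle L" "v \<in> fib \<alpha> L (i+j) x"
  shows "\<exists>u w. u \<in> fib \<alpha> L j ((\<alpha> ^^ i) x) \<and> w \<in> fib \<alpha> L i x \<and> v = tens i u w"
proof -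
  have "v \<in> {(\<lambda>l. c * fr \<alpha> L (i+j) x l) | c. True}" using assms(2) unfolding fib_fr[OF assms(1)] .
  then obtain c where c: "v = (\<lambda>l. c * fr \<alpha> L (i+j) x l)" by blast
  have fs: "fr \<alpha> L (i+j) x = tens i (fr \<alpha> L j ((\<alpha> ^^ i) x)) (fr \<alpha> L i x)"
    by (rule fr_split[OF assms(1)])
  have 1: "v = tens i (\<lambda>l. c * fr \<alpha> L j ((\<alpha> ^^ i) x) l) (fr \<alpha> L i x)"
    unfolding c fs tens_scale1 ..
  have 2: "(\<lambda>l. c * fr \<alpha> L j ((\<alpha> ^^ i) x) l) \<in> fib \<alpha> L j ((\<alpha> ^^ i) x)"
    unfolding fib_fr[OF assms(1)] by blast
  show ?thesis using 1 2 fr_in[OF assms(1), of \<alpha> i x] by (intro exI conjI)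
qed

lemma fib_Dfib:
  fixes L :: "'a::topological_space \<Rightarrow> ('n \<Rightarrow> complex) set"
  assumes "line_bundle L" "i < n" "v \<in> fib \<alpha> L i x"
  shows "v \<in> Dfib \<alpha> L n x"
  unfolding Dfib_def
proof (intro CollectI conjI allI impI)
  fix l :: "'n list" assume "n \<le> length l" thus "v l = 0" using fib_supp[OF assms(3)] assms(2) by auto
next
  fix j assume "j < n"
  show "(\<lambda>l. if length l = j then v l else 0) \<in> fib \<alpha> L j x"
  proof (cases "j = i")
    case True
    have "(\<lambda>l. if length l = j then v l else 0) = v"
      using fib_supp[OF assms(3)] True by (auto simp: fun_eq_iff)
    thus ?thesis using True assms(3) by simp
  next
    case False
    have "(\<lambda>l. if length l = j then v l else 0) = (\<lambda>l. 0)"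
      using fib_supp[OF assms(3)] False by (auto simp: fun_eq_iff)
    thus ?thesis using zero_in_fib[OF assms(1)] by simp
  qed
qed

lemma zero_Dfib: "line_bundle L \<Longrightarrow> (\<lambda>l. 0) \<in> Dfib \<alpha> L n x"
  unfolding Dfib_def using zero_in_fib by auto

lemma lin_scale:
  assumes "line_bundle L"
    and lin: "\<forall>u\<in>Dfib \<alpha> L n y. \<forall>v\<in>Dfib \<alpha> L n y. \<forall>c. f (\<lambda>l. c * u l + v l) = (\<lambda>l. c * f u l + f v l)"
    and u: "u \<in> Dfib \<alpha> L n y"
  shows "f (\<lambda>l. c * u l) = (\<lambda>l. c * f u l)"
proof -
  have h: "f (\<lambda>l. c * u l + v l) = (\<lambda>l. c * f u l + f v l)"
    if "u \<in> Dfib \<alpha> L n y" "v \<in> Dfib \<alpha> L n y" for u v c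
    using lin that by blast
  have z: "(\<lambda>l. 0) \<in> Dfib \<alpha> L n y" by (rule zero_Dfib[OF assms(1)])
  have "f (\<lambda>l. 1 * 0 + 0) = (\<lambda>l. 1 * f (\<lambda>l. 0) l + f (\<lambda>l. 0) l)" using h[OF z z, of 1] by simp
  hence f0: "f (\<lambda>l. 0) = (\<lambda>l. 0)" by (simp add: fun_eq_iff)
  have "f (\<lambda>l. c * u l + 0) = (\<lambda>l. c * f u l + f (\<lambda>l. 0) l)" using h[OF u z, of c] by simp
  thus ?thesis by (simp add: f0)
qed

lemma tens_cancel:
  assumes "line_bundle L" "tens i w (fr \<alpha> L i x) = tens i w' (fr \<alpha> L i x)"
  shows "w = w'"
proof
  fix l
  obtain l0 where l0: "length l0 = i" "fr \<alpha> L i x l0 \<noteq> 0" using fr_nz[OF assms(1)] by blast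
  have "tens i w (fr \<alpha> L i x) (l0 @ l) = tens i w' (fr \<alpha> L i x) (l0 @ l)" using assms(2) by simp
  thus "w l = w' l" using l0 by (simp add: tens_app)
qed

lemma coef_eq:
  assumes "line_bundle L" "i + m < n" "w \<in> fib \<alpha> L m ((\<alpha> ^^ i) y)"
    "\<forall>v\<in>fib \<alpha> L i y. \<sigma> y v = tens i w v"
  shows "coef \<alpha> L n m \<sigma> i y = w"
proof -
  have "coef \<alpha> L n m \<sigma> i y = (THE w. w \<in> fib \<alpha> L m ((\<alpha> ^^ i) y) \<and> (\<forall>v\<in>fib \<alpha> L i y. \<sigma> y v = tens i w v))"
    unfolding coef_def using assms(2) by simp
  also have "\<dots> = w"
  proof (rule the_equality)
    show "w \<in> fib \<alpha> L m ((\<alpha> ^^ i) y) \<and> (\<forall>v\<in>fib \<alpha> L i y. \<sigma> y v = tens i w v)" using assms(3,4) by (rule conjI)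
  next
    fix w' assume a: "w' \<in> fib \<alpha> L m ((\<alpha> ^^ i) y) \<and> (\<forall>v\<in>fib \<alpha> L i y. \<sigma> y v = tens i w' v)"
    have e: "fr \<alpha> L i y \<in> fib \<alpha> L i y" by (rule fr_in[OF assms(1)])
    have "tens i w' (fr \<alpha> L i y) = \<sigma> y (fr \<alpha> L i y)" using a e by simp
    also have "\<dots> = tens i w (fr \<alpha> L i y)" using assms(4) e by simp
    finally show "w' = w" by (rule tens_cancel[OF assms(1)])
  qed
  finally show ?thesis .
qed

lemma coef_spec:
  assumes "line_bundle L" "i + m < n"
    and lin: "\<forall>u\<in>Dfib \<alpha> L n y. \<forall>v\<in>Dfib \<alpha> L n y. \<forall>c. \<sigma> y (\<lambda>l. c * u l + v l) = (\<lambda>l. c * \<sigma> y u l + \<sigma> y v l)"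
    and into: "\<forall>v\<in>fib \<alpha> L i y. \<sigma> y v \<in> fib \<alpha> L (i+m) y"
  shows "coef \<alpha> L n m \<sigma> i y \<in> fib \<alpha> L m ((\<alpha> ^^ i) y) \<and>
         (\<forall>v\<in>fib \<alpha> L i y. \<sigma> y v = tens i (coef \<alpha> L n m \<sigma> i y) v)"
proof -
  let ?e = "fr \<alpha> L i y"
  have e: "?e \<in> fib \<alpha> L i y" by (rule fr_in[OF assms(1)])
  then obtain c where c: "\<sigma> y ?e = (\<lambda>l. c * fr \<alpha> L (i+m) y l)" using into fib_fr[OF assms(1)] by blast
  define w where "w = (\<lambda>l. c * fr \<alpha> L m ((\<alpha> ^^ i) y) l)"
  have w: "w \<in> fib \<alpha> L m ((\<alpha> ^^ i) y)" unfolding w_def using fib_fr[OF assms(1)] by blast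
  have se: "\<sigma> y ?e = tens i w ?e" by (simp add: c w_def fr_split[OF assms(1)] tens_scale1)
  have all: "\<forall>v\<in>fib \<alpha> L i y. \<sigma> y v = tens i w v"
  proof
    fix v assume "v \<in> fib \<alpha> L i y"
    then obtain d where d: "v = (\<lambda>l. d * ?e l)" using fib_fr[OF assms(1)] by blast
    have eD: "?e \<in> Dfib \<alpha> L n y" using fib_Dfib[OF assms(1) _ e] assms(2) by simp
    have "\<sigma> y v = (\<lambda>l. d * \<sigma> y ?e l)" unfolding d by (rule lin_scale[OF assms(1) lin eD])
    also have "\<dots> = tens i w v" by (simp add: se d tens_scale2)
    finally show "\<sigma> y v = tens i w v" .
  qed
  have "coef \<alpha> L n m \<sigma> i y = w" by (rule coef_eq[where \<sigma>=\<sigma> and y=y, OF assms(1,2) w all])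
  thus ?thesis using w all by simp
qed

lemma coef_zero:
  assumes "line_bundle L" "\<forall>v\<in>fib \<alpha> L i y. \<sigma> y v = (\<lambda>l. 0)"
  shows "coef \<alpha> L n m \<sigma> i y = (\<lambda>l. 0)"
proof (cases "i + m < n")
  case True
  show ?thesis by (rule coef_eq[where \<sigma>=\<sigma> and y=y, OF assms(1) True zero_in_fib[OF assms(1)]]) (simp add: assms(2))
next
  case False thus ?thesis by (simp add: coef_def)
qed



definition ip :: "('n::finite \<Rightarrow> complex) \<Rightarrow> ('n \<Rightarrow> complex) \<Rightarrow> complex" where
  "ip a b = (\<Sum>k\<in>UNIV. a k * cnj (b k))"

definition pr :: "('a \<Rightarrow> ('n::finite \<Rightarrow> complex) set) \<Rightarrow> 'a \<Rightarrow> ('n \<Rightarrow> complex) \<Rightarrow> ('n \<Rightarrow> complex)" where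
  "pr L y a = (\<lambda>k. ip a (sv L y) / ip (sv L y) (sv L y) * sv L y k)"

lemma ip_scale2: "ip a (\<lambda>i. c * b i) = cnj c * ip a b"
  unfolding ip_def by (simp add: sum_distrib_left mult_ac)

lemma ip_scale1: "ip (\<lambda>i. c * a i) b = c * ip a b"
  unfolding ip_def by (simp add: sum_distrib_left mult_ac)

lemma ip_self_nz:
  fixes s :: "'n::finite \<Rightarrow> complex"
  assumes "s \<noteq> (\<lambda>i. 0)" shows "ip s s \<noteq> 0"
proof
  assume z: "ip s s = 0"
  have "ip s s = (\<Sum>k\<in>UNIV. complex_of_real ((cmod (s k))\<^sup>2))"
    unfolding ip_def by (rule sum.cong[OF refl], rule complex_norm_square[symmetric])
  also have "\<dots> = complex_of_real (\<Sum>k\<in>UNIV. (cmod (s k))\<^sup>2)" by (rule of_real_sum[symmetric])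
  finally have h: "ip s s = complex_of_real (\<Sum>k\<in>UNIV. (cmod (s k))\<^sup>2)" .
  have "complex_of_real (\<Sum>k\<in>UNIV. (cmod (s k))\<^sup>2) = 0" using h z by metis
  hence "(\<Sum>k\<in>UNIV. (cmod (s k))\<^sup>2) = 0" by (simp only: of_real_eq_0_iff)
  hence "\<forall>k\<in>UNIV. (cmod (s k))\<^sup>2 = 0" by (subst (asm) sum_nonneg_eq_0_iff) auto
  hence "s = (\<lambda>i. 0)" by (auto simp: fun_eq_iff)
  thus False using assms by simp
qed

lemma sv_L: "line_bundle L \<Longrightarrow> L y = {(\<lambda>i. c * sv L y i) | c. True}"
  using sv_prop by (rule conjunct2)

lemma sv_nz: "line_bundle L \<Longrightarrow> sv L y \<noteq> (\<lambda>i. 0)"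
  using sv_prop by (rule conjunct1)

lemma pr_in: "line_bundle L \<Longrightarrow> pr L y a \<in> L y"
  unfolding pr_def by (subst sv_L) blast+

lemma pr_self:
  assumes lb: "line_bundle L" shows "pr L y (sv L y) = sv L y"
  unfolding pr_def using ip_self_nz[OF sv_nz[OF lb]] by simp

lemma pr_local:
  fixes L :: "'a::metric_space \<Rightarrow> ('n::finite \<Rightarrow> complex) set"
  assumes lb: "line_bundle L" and s0: "s0 \<noteq> (\<lambda>i. 0)" and Ly: "L y = {(\<lambda>i. c * s0 i) | c. True}"
  shows "pr L y a = (\<lambda>k. ip a s0 / ip s0 s0 * s0 k)"
proof -
  have "sv L y = (\<lambda>i. 1 * sv L y i)" by simp
  hence "sv L y \<in> L y" by (subst sv_L[OF lb]) blast
  then obtain c0 where c0: "sv L y = (\<lambda>i. c0 * s0 i)" unfolding Ly by blast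
  have "c0 \<noteq> 0" using sv_nz[OF lb, of y] c0 by auto
  hence "cnj c0 \<noteq> 0" by simp
  have n0: "ip s0 s0 \<noteq> 0" by (rule ip_self_nz[OF s0])
  show ?thesis unfolding pr_def c0 ip_scale1 ip_scale2
    using \<open>c0 \<noteq> 0\<close> \<open>cnj c0 \<noteq> 0\<close> n0 by (auto simp: fun_eq_iff field_simps)
qed

lemma pr_cont:
  fixes L :: "'a::metric_space \<Rightarrow> ('n::finite \<Rightarrow> complex) set"
  assumes lb: "line_bundle L"
  shows "continuous_on UNIV (\<lambda>y. pr L y a k)"
proof (rule continuous_at_imp_continuous_on, intro ballI)
  fix x :: 'a
  have "\<exists>U s. open U \<and> x \<in> U \<and> (\<forall>i. continuous_on U (\<lambda>y. s y i)) \<and>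
      (\<forall>y\<in>U. s y \<noteq> (\<lambda>i. 0) \<and> L y = {(\<lambda>i. c * s y i) | c. True})"
    using lb unfolding line_bundle_def by (rule spec)
  then obtain U s where U: "open U" "x \<in> U" and sc: "\<forall>i. continuous_on U (\<lambda>y. s y i)"
    and P: "\<forall>y\<in>U. s y \<noteq> (\<lambda>i. 0) \<and> L y = {(\<lambda>i. c * s y i) | c. True}"
    by (elim exE conjE)
  have Py: "s y \<noteq> (\<lambda>i. 0)" "L y = {(\<lambda>i. c * s y i) | c. True}" if "y \<in> U" for y
    using bspec[OF P that] by (rule conjunct1, rule conjunct2)
  have nz: "ip (s y) (s y) \<noteq> 0" if "y \<in> U" for y by (rule ip_self_nz[OF Py(1)[OF that]])
  have cs: "continuous_on U (\<lambda>y. s y i)" for i using sc by (rule spec)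
  have c1: "continuous_on U (\<lambda>y. ip a (s y))" unfolding ip_def
    by (intro continuous_on_sum continuous_on_mult continuous_on_const continuous_on_cnj cs)
  have c2: "continuous_on U (\<lambda>y. ip (s y) (s y))" unfolding ip_def
    by (intro continuous_on_sum continuous_on_mult continuous_on_const continuous_on_cnj cs)
  have c3: "continuous_on U (\<lambda>y. ip a (s y) / ip (s y) (s y) * s y k)"
    by (intro continuous_on_mult continuous_on_divide c1 c2 cs) (simp add: nz)
  have "continuous_on U (\<lambda>y. pr L y a k)"
  proof (rule continuous_on_eq[OF c3])
    fix y assume "y \<in> U"
    show "ip a (s y) / ip (s y) (s y) * s y k = pr L y a k"
      unfolding pr_local[OF lb Py[OF \<open>y \<in> U\<close>]] by simp
  qed
  thus "isCont (\<lambda>y. pr L y a k) x" using U continuous_on_eq_continuous_at by blast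
qed

primrec Esec :: "('a \<Rightarrow> 'a) \<Rightarrow> ('a \<Rightarrow> ('n::finite \<Rightarrow> complex) set) \<Rightarrow> 'a \<Rightarrow> nat \<Rightarrow> 'a \<Rightarrow> ('n list \<Rightarrow> complex)" where
  "Esec \<alpha> L y0 0 y = (\<lambda>l. if l = [] then 1 else 0)"
| "Esec \<alpha> L y0 (Suc j) y = tens j (lift1 (pr L ((\<alpha> ^^ j) y) (sv L ((\<alpha> ^^ j) y0)))) (Esec \<alpha> L y0 j y)"

lemma Esec_in: "line_bundle L \<Longrightarrow> Esec \<alpha> L y0 j y \<in> fib \<alpha> L j y"
proof (induction j)
  case 0 show ?case unfolding fib.simps Esec.simps by blast
next
  case (Suc j)
  have "pr L ((\<alpha> ^^ j) y) (sv L ((\<alpha> ^^ j) y0)) \<in> L ((\<alpha> ^^ j) y)" by (rule pr_in[OF Suc.prems])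
  thus ?case using Suc unfolding fib.simps Esec.simps by blast
qed

lemma Esec_y0: "line_bundle L \<Longrightarrow> Esec \<alpha> L y0 j y0 = fr \<alpha> L j y0"
  by (induction j) (simp_all add: pr_self)

lemma lift1_cases: "lift1 w l' = (if \<exists>b. l' = [b] then w (hd l') else 0)"
  by (auto simp: lift1_def split: list.split)

lemma Esec_cont:
  fixes \<alpha> :: "'a::metric_space \<Rightarrow> 'a" and L :: "'a \<Rightarrow> ('n::finite \<Rightarrow> complex) set"
  assumes lb: "line_bundle L" and ac: "\<forall>j. continuous_on UNIV (\<alpha> ^^ j)"
  shows "continuous_on UNIV (\<lambda>y. Esec \<alpha> L y0 j y l)"
proof (induction j arbitrary: l)
  case 0 show ?case by simp
next
  case (Suc j)
  let ?a = "sv L ((\<alpha> ^^ j) y0)"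
  have c1: "continuous_on UNIV (\<lambda>y. lift1 (pr L ((\<alpha> ^^ j) y) ?a) (drop j l))"
  proof (cases "\<exists>b. drop j l = [b]")
    case True
    have "continuous_on UNIV (\<lambda>y. pr L ((\<alpha> ^^ j) y) ?a (hd (drop j l)))"
      by (rule continuous_on_compose2[OF pr_cont[OF lb] ac[rule_format, of j]]) auto
    thus ?thesis using True by (simp add: lift1_cases)
  next
    case False thus ?thesis by (simp add: lift1_cases)
  qed
  have "continuous_on UNIV (\<lambda>y. lift1 (pr L ((\<alpha> ^^ j) y) ?a) (drop j l) * Esec \<alpha> L y0 j y (take j l))"
    by (rule continuous_on_mult[OF c1 Suc.IH])
  thus ?case by (simp add: tens_def)
qed

lemma coef_cont:
  fixes \<alpha> :: "'a::metric_space \<Rightarrow> 'a" and L :: "'a \<Rightarrow> ('n::finite \<Rightarrow> complex) set"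
  assumes lb: "line_bundle L" and ac: "\<forall>j. continuous_on UNIV (\<alpha> ^^ j)"
    and ES: "End_section \<alpha> L n S \<sigma>"
    and sd: "i + m < n \<Longrightarrow> \<forall>y\<in>S. \<forall>v\<in>fib \<alpha> L i y. \<sigma> y v \<in> fib \<alpha> L (i+m) y"
    and "i < n"
  shows "continuous_on S (\<lambda>y. coef \<alpha> L n m \<sigma> i y l)"
proof (cases "i + m < n")
  case False
  thus ?thesis by (simp add: coef_def)
next
  case True
  have lin: "\<forall>y\<in>S. \<forall>u\<in>Dfib \<alpha> L n y. \<forall>v\<in>Dfib \<alpha> L n y. \<forall>c. \<sigma> y (\<lambda>l. c * u l + v l) = (\<lambda>l. c * \<sigma> y u l + \<sigma> y v l)"
    using ES unfolding End_section_def by blast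
  have csec: "\<And>v. cont_sec S v \<Longrightarrow> (\<forall>y\<in>S. v y \<in> Dfib \<alpha> L n y) \<Longrightarrow> cont_sec S (\<lambda>y. \<sigma> y (v y))"
    using ES unfolding End_section_def by blast
  have spec: "\<forall>v\<in>fib \<alpha> L i y. \<sigma> y v = tens i (coef \<alpha> L n m \<sigma> i y) v" if "y \<in> S" for y
    using coef_spec[OF lb True, of \<alpha> y \<sigma>] lin sd[OF True] that by blast
  show ?thesis unfolding continuous_on_eq_continuous_within
  proof
    fix y0 assume y0: "y0 \<in> S"
    obtain l0 where l0: "length l0 = i" "fr \<alpha> L i y0 l0 \<noteq> 0" using fr_nz[OF lb] by blast
    define e where "e = (\<lambda>y. Esec \<alpha> L y0 i y)"
    have ec: "continuous_on UNIV (\<lambda>y. e y l')" for l' unfolding e_def by (rule Esec_cont[OF lb ac])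
    have ey0: "e y0 l0 \<noteq> 0" unfolding e_def Esec_y0[OF lb] by (rule l0(2))
    define V where "V = {y. e y l0 \<noteq> 0}"
    have oV: "open V" unfolding V_def by (rule open_Collect_neq[OF ec continuous_on_const])
    have y0V: "y0 \<in> V" unfolding V_def using ey0 by simp
    have efib: "e y \<in> fib \<alpha> L i y" for y unfolding e_def by (rule Esec_in[OF lb])
    have eD: "e y \<in> Dfib \<alpha> L n y" for y by (rule fib_Dfib[OF lb \<open>i < n\<close> efib])
    have "cont_sec S e" unfolding cont_sec_def using ec continuous_on_subset by blast
    hence hs: "cont_sec S (\<lambda>y. \<sigma> y (e y))" using csec eD by blast
    have eq: "coef \<alpha> L n m \<sigma> i y l = \<sigma> y (e y) (l0 @ l) / e y l0" if "y \<in> S \<inter> V" for y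
    proof -
      have "\<sigma> y (e y) = tens i (coef \<alpha> L n m \<sigma> i y) (e y)" using spec efib that by blast
      hence "\<sigma> y (e y) (l0 @ l) = coef \<alpha> L n m \<sigma> i y l * e y l0" using tens_app[OF l0(1)] by simp
      moreover have "e y l0 \<noteq> 0" using that unfolding V_def by simp
      ultimately show ?thesis by simp
    qed
    have "continuous_on (S \<inter> V) (\<lambda>y. \<sigma> y (e y) (l0 @ l) / e y l0)"
    proof (rule continuous_on_divide)
      show "continuous_on (S \<inter> V) (\<lambda>y. \<sigma> y (e y) (l0 @ l))"
        using hs unfolding cont_sec_def by (meson continuous_on_subset inf_le1)
      show "continuous_on (S \<inter> V) (\<lambda>y. e y l0)" using ec continuous_on_subset by blast
      show "\<forall>y\<in>S \<inter> V. e y l0 \<noteq> 0" unfolding V_def by simp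
    qed
    hence "continuous_on (S \<inter> V) (\<lambda>y. coef \<alpha> L n m \<sigma> i y l)"
      using eq continuous_on_cong by (smt (verit))
    hence "continuous (at y0 within S \<inter> V) (\<lambda>y. coef \<alpha> L n m \<sigma> i y l)"
      using y0 y0V continuous_on_eq_continuous_within by blast
    moreover have "at y0 within S = at y0 within S \<inter> V"
      by (rule at_within_nhd[OF y0V oV]) blast
    ultimately show "continuous (at y0 within S) (\<lambda>y. coef \<alpha> L n m \<sigma> i y l)" by simp
  qed
qed



lemma inv_pow_pow:
  fixes \<alpha> :: "'a \<Rightarrow> 'a"
  assumes "bij \<alpha>" shows "(inv \<alpha> ^^ k) ((\<alpha> ^^ k) y) = y"
proof (induction k arbitrary: y)
  case 0 show ?case by simp
next
  case (Suc k)
  have e1: "(inv \<alpha> ^^ Suc k) z = (inv \<alpha> ^^ k) (inv \<alpha> z)" for z by (simp only: funpow_Suc_right comp_apply)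
  have e2: "(\<alpha> ^^ Suc k) y = \<alpha> ((\<alpha> ^^ k) y)" by simp
  have e3: "inv \<alpha> (\<alpha> ((\<alpha> ^^ k) y)) = (\<alpha> ^^ k) y" using assms bij_is_inj inv_f_f by metis
  show ?case unfolding e1 e2 e3 by (rule Suc)
qed

lemma pow_inv_pow:
  fixes \<alpha> :: "'a \<Rightarrow> 'a"
  assumes "bij \<alpha>" shows "(\<alpha> ^^ k) ((inv \<alpha> ^^ k) y) = y"
proof (induction k arbitrary: y)
  case 0 show ?case by simp
next
  case (Suc k)
  have e1: "(\<alpha> ^^ Suc k) z = (\<alpha> ^^ k) (\<alpha> z)" for z by (simp only: funpow_Suc_right comp_apply)
  have e2: "(inv \<alpha> ^^ Suc k) y = inv \<alpha> ((inv \<alpha> ^^ k) y)" by simp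
  have e3: "\<alpha> (inv \<alpha> ((inv \<alpha> ^^ k) y)) = (inv \<alpha> ^^ k) y" using assms bij_is_surj surj_f_inv_f by metis
  show ?case unfolding e1 e2 e3 by (rule Suc)
qed

lemma inv_pow_pow_le:
  fixes \<alpha> :: "'a \<Rightarrow> 'a"
  assumes "bij \<alpha>" "k \<le> p" shows "(inv \<alpha> ^^ k) ((\<alpha> ^^ p) y) = (\<alpha> ^^ (p - k)) y"
proof -
  have "(\<alpha> ^^ p) y = (\<alpha> ^^ k) ((\<alpha> ^^ (p - k)) y)"
    using assms(2) by (metis funpow_add comp_apply le_add_diff_inverse)
  thus ?thesis using inv_pow_pow[OF assms(1)] by simp
qed

lemma pow_add_apply: "((\<alpha>::'a\<Rightarrow>'a) ^^ (a + b)) y = (\<alpha> ^^ a) ((\<alpha> ^^ b) y)"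
  by (simp add: funpow_add)

lemma inv_pow_comm:
  fixes \<alpha> :: "'a \<Rightarrow> 'a"
  assumes "bij \<alpha>" shows "(inv \<alpha> ^^ b) (\<alpha> x) = \<alpha> ((inv \<alpha> ^^ b) x)"
proof (induction b)
  case 0 show ?case by simp
next
  case (Suc b)
  have i1: "inv \<alpha> (\<alpha> z) = z" for z using assms bij_is_inj inv_f_f by metis
  have i2: "\<alpha> (inv \<alpha> z) = z" for z using assms bij_is_surj surj_f_inv_f by metis
  show ?case using Suc by (simp add: i1 i2)
qed

lemma cont_pow:
  fixes f :: "'a::topological_space \<Rightarrow> 'a"
  assumes "continuous_on UNIV f" shows "continuous_on UNIV (f ^^ j)"
proof (induction j)
  case 0 show ?case by (simp add: continuous_on_id)
next
  case (Suc j)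
  have "continuous_on UNIV (\<lambda>x. f ((f ^^ j) x))"
    by (rule continuous_on_compose2[OF assms Suc]) simp
  thus ?case by (simp add: comp_def)
qed

lemma return_bound:
  fixes \<alpha> :: "'a::metric_space \<Rightarrow> 'a"
  assumes cpt: "compact (UNIV :: 'a set)" and mh: "minimal_homeo \<alpha>" and iY: "interior Y \<noteq> {}"
  shows "\<exists>N. \<forall>x. \<exists>k\<le>N. (inv \<alpha> ^^ k) x \<in> Y"
proof -
  define \<beta> where "\<beta> = inv \<alpha>"
  have bij: "bij \<alpha>" and ca: "continuous_on UNIV \<alpha>" and cb: "continuous_on UNIV \<beta>"
    and mini: "\<And>C. closed C \<Longrightarrow> \<alpha> ` C = C \<Longrightarrow> C = {} \<or> C = UNIV"
    using mh unfolding minimal_homeo_def \<beta>_def by blast+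
  define U where "U = interior Y"
  have oU: "open U" and UY: "U \<subseteq> Y" and Une: "U \<noteq> {}" using iY interior_subset unfolding U_def by auto
  define f where "f = (\<lambda>p::nat\<times>nat. \<lambda>x. (\<alpha> ^^ fst p) ((\<beta> ^^ snd p) x))"
  have fc: "continuous_on UNIV (f p)" for p
  proof -
    have "continuous_on UNIV (\<lambda>x. (\<alpha> ^^ fst p) ((\<beta> ^^ snd p) x))"
      by (rule continuous_on_compose2[OF cont_pow[OF ca] cont_pow[OF cb]]) simp
    thus ?thesis unfolding f_def .
  qed
  define W where "W = (\<Union>p\<in>UNIV. f p -` U)"
  have oW: "open W" unfolding W_def by (intro open_UN ballI open_vimage[OF oU fc])
  have i1: "\<beta> (\<alpha> z) = z" for z using bij bij_is_inj inv_f_f unfolding \<beta>_def by metis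
  have i2: "\<alpha> (\<beta> z) = z" for z using bij bij_is_surj surj_f_inv_f unfolding \<beta>_def by metis
  have Wa: "x \<in> W \<longleftrightarrow> \<alpha> x \<in> W" for x
  proof
    assume "x \<in> W"
    then obtain a b where ab: "(\<alpha> ^^ a) ((\<beta> ^^ b) x) \<in> U" unfolding W_def f_def by auto
    have "(\<beta> ^^ Suc b) (\<alpha> x) = (\<beta> ^^ b) x" by (simp only: funpow_Suc_right comp_apply i1)
    hence "f (a, Suc b) (\<alpha> x) \<in> U" using ab unfolding f_def by simp
    thus "\<alpha> x \<in> W" unfolding W_def by blast
  next
    assume "\<alpha> x \<in> W"
    then obtain a b where ab: "(\<alpha> ^^ a) ((\<beta> ^^ b) (\<alpha> x)) \<in> U" unfolding W_def f_def by auto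
    have "(\<beta> ^^ b) (\<alpha> x) = \<alpha> ((\<beta> ^^ b) x)" unfolding \<beta>_def by (rule inv_pow_comm[OF bij])
    hence "(\<alpha> ^^ Suc a) ((\<beta> ^^ b) x) \<in> U" using ab by (simp only: funpow_Suc_right comp_apply)
    hence "f (Suc a, b) x \<in> U" unfolding f_def by simp
    thus "x \<in> W" unfolding W_def by blast
  qed
  have "\<alpha> ` (- W) = - W"
  proof
    show "\<alpha> ` (- W) \<subseteq> - W" using Wa by blast
    show "- W \<subseteq> \<alpha> ` (- W)"
    proof
      fix x assume "x \<in> - W"
      hence "\<beta> x \<in> - W" using Wa[of "\<beta> x"] i2 by simp
      thus "x \<in> \<alpha> ` (- W)" using i2[of x] by (metis imageI)
    qed
  qed
  hence "- W = {} \<or> - W = UNIV" using mini[of "- W"] oW by (simp add: closed_Compl)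
  moreover have "U \<subseteq> W"
  proof
    fix u assume "u \<in> U"
    hence "f (0,0) u \<in> U" by (simp add: f_def)
    thus "u \<in> W" unfolding W_def by blast
  qed
  ultimately have WU: "W = UNIV" using Une by auto
  have cov: "UNIV \<subseteq> (\<Union>p\<in>UNIV. f p -` U)" using WU unfolding W_def by simp
  obtain F where F: "finite F" "UNIV \<subseteq> (\<Union>p\<in>F. f p -` U)"
  proof (rule compactE_image[OF cpt _ cov])
    show "open (f T -` U)" for T by (rule open_vimage[OF oU fc])
  qed
  obtain A where A: "\<forall>p\<in>F. fst p \<le> A" using F(1) finite_nat_set_iff_bounded_le[of "fst ` F"] by auto
  obtain B where B: "\<forall>p\<in>F. snd p \<le> B" using F(1) finite_nat_set_iff_bounded_le[of "snd ` F"] by auto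
  show ?thesis
  proof (rule exI[of _ "A + B"], rule allI)
    fix x
    have "(\<beta> ^^ A) x \<in> (\<Union>p\<in>F. f p -` U)" using F(2) by blast
    then obtain a b where ab: "(a, b) \<in> F" "(\<alpha> ^^ a) ((\<beta> ^^ b) ((\<beta> ^^ A) x)) \<in> U"
      unfolding f_def by auto
    have "a \<le> A" using A ab(1) by fastforce
    have "b \<le> B" using B ab(1) by fastforce
    have "(\<beta> ^^ b) ((\<beta> ^^ A) x) = (\<beta> ^^ a) ((\<beta> ^^ (b + A - a)) x)"
      using \<open>a \<le> A\<close> by (simp only: pow_add_apply[symmetric]) simp
    hence "(\<alpha> ^^ a) ((\<beta> ^^ b) ((\<beta> ^^ A) x)) = (\<beta> ^^ (b + A - a)) x"
      using pow_inv_pow[OF bij] unfolding \<beta>_def by simp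
    hence "(\<beta> ^^ (b + A - a)) x \<in> Y" using ab(2) UY by auto
    moreover have "b + A - a \<le> A + B" using \<open>b \<le> B\<close> by simp
    ultimately show "\<exists>k\<le>A + B. (inv \<alpha> ^^ k) x \<in> Y" unfolding \<beta>_def by blast
  qed
qed



lemma decomp_index:
  "i < sum_list (ts::nat list) \<Longrightarrow> \<exists>s<length ts. sum_list (take s ts) \<le> i \<and> i < sum_list (take s ts) + ts ! s"
proof (induction ts arbitrary: i)
  case Nil thus ?case by simp
next
  case (Cons a ts)
  show ?case
  proof (cases "i < a")
    case True thus ?thesis by (intro exI[of _ 0]) simp
  next
    case False
    hence "i - a < sum_list ts" using Cons.prems by simp
    then obtain s where "s < length ts" "sum_list (take s ts) \<le> i - a" "i - a < sum_list (take s ts) + ts ! s"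
      using Cons.IH by blast
    thus ?thesis using False by (intro exI[of _ "Suc s"]) auto
  qed
qed

lemma sum_take_le:
  assumes "s < length (ts::nat list)"
  shows "sum_list (take s ts) + ts ! s \<le> sum_list ts"
proof -
  have "sum_list ts = sum_list (take (Suc s) ts) + sum_list (drop (Suc s) ts)"
    by (metis append_take_drop_id sum_list_append)
  moreover have "take (Suc s) ts = take s ts @ [ts ! s]" using assms by (rule take_Suc_conv_app_nth)
  ultimately show ?thesis by simp
qed

theorem lemma8p3:
  fixes \<alpha> :: "'a::metric_space \<Rightarrow> 'a"
    and L :: "'a \<Rightarrow> ('n::finite \<Rightarrow> complex) set"
    and Y :: "'a set"
    and \<sigma> :: "nat \<Rightarrow> 'a \<Rightarrow> ('n list \<Rightarrow> complex) \<Rightarrow> ('n list \<Rightarrow> complex)"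
    and m :: nat
  assumes "compact (UNIV :: 'a set)" and "infinite (UNIV :: 'a set)"
    and "minimal_homeo \<alpha>"
    and "line_bundle L"
    and "closed Y" and "interior Y \<noteq> {}"
    and "\<forall>n\<in>Rset \<alpha> Y. End_section \<alpha> L n (closure (Ysub \<alpha> Y n)) (\<sigma> n)"
    and "bdp \<alpha> L Y \<sigma>"
    and "m < Max (Rset \<alpha> Y)"
    and "\<forall>n\<in>Rset \<alpha> Y. subdiag \<alpha> L n m (closure (Ysub \<alpha> Y n)) (\<sigma> n)"
  shows "\<exists>G. cont_sec UNIV G \<and> (\<forall>x. G x \<in> fib \<alpha> L m x) \<and>
     (\<forall>n\<in>Rset \<alpha> Y. \<forall>i<n. \<forall>y\<in>closure (Ysub \<alpha> Y n).
        G ((\<alpha> ^^ i) y) = coef \<alpha> L n m (\<sigma> n) i y) \<and>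
     (1 \<le> m \<longrightarrow> (\<forall>j\<in>{1..m}. \<forall>x. (\<alpha> ^^ j) x \<in> Y \<longrightarrow> G x = (\<lambda>l. 0)))"
proof -
  define \<beta> where "\<beta> = inv \<alpha>"
  have bij: "bij \<alpha>" and ca: "continuous_on UNIV \<alpha>" and cb: "continuous_on UNIV \<beta>"
    using assms(3) unfolding minimal_homeo_def \<beta>_def by blast+
  have lb: "line_bundle L" by (rule assms(4))
  have ac: "\<forall>j. continuous_on UNIV (\<alpha> ^^ j)" using cont_pow[OF ca] by blast
  have bc: "continuous_on UNIV (\<beta> ^^ j)" for j by (rule cont_pow[OF cb])
  obtain N where Nb: "\<forall>x. \<exists>k\<le>N. (\<beta> ^^ k) x \<in> Y"
    using return_bound[OF assms(1,3,6)] unfolding \<beta>_def by blast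
  have rex: "\<exists>k. (1 \<le> k \<and> (\<alpha> ^^ k) y \<in> Y) \<and> k \<le> Suc N" for y
  proof -
    obtain k where k: "k \<le> N" "(\<beta> ^^ k) ((\<alpha> ^^ (Suc N)) y) \<in> Y" using Nb by blast
    have "(\<beta> ^^ k) ((\<alpha> ^^ (Suc N)) y) = (\<alpha> ^^ (Suc N - k)) y"
      unfolding \<beta>_def by (rule inv_pow_pow_le[OF bij]) (use k in simp)
    thus ?thesis using k by (intro exI[of _ "Suc N - k"]) auto
  qed
  have rex': "\<exists>k. 1 \<le> k \<and> (\<alpha> ^^ k) y \<in> Y" for y using rex[of y] by blast
  have rY1: "1 \<le> rY \<alpha> Y y" and rYY: "(\<alpha> ^^ rY \<alpha> Y y) y \<in> Y" for y
    using LeastI_ex[OF rex'[of y]] unfolding rY_def by auto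
  have rYmin: "(\<alpha> ^^ k) y \<notin> Y" if "1 \<le> k" "k < rY \<alpha> Y y" for y k
    using not_less_Least[of k "\<lambda>n. 1 \<le> n \<and> (\<alpha> ^^ n) y \<in> Y"] that unfolding rY_def by blast
  have rYle: "rY \<alpha> Y y \<le> Suc N" for y
  proof -
    obtain k where k: "1 \<le> k \<and> (\<alpha> ^^ k) y \<in> Y" "k \<le> Suc N" using rex[of y] by blast
    have "rY \<alpha> Y y \<le> k" unfolding rY_def by (rule Least_le[of "\<lambda>n. 1 \<le> n \<and> (\<alpha> ^^ n) y \<in> Y", OF k(1)])
    thus ?thesis using k(2) by simp
  qed
  have finR: "finite (Rset \<alpha> Y)"
    by (rule finite_subset[OF _ finite_atMost[of "Suc N"]]) (auto simp: Rset_def rYle)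
  have RsetI: "rY \<alpha> Y y \<in> Rset \<alpha> Y" if "y \<in> Y" for y unfolding Rset_def using that by simp
  have YsubI: "y \<in> Ysub \<alpha> Y (rY \<alpha> Y y)" if "y \<in> Y" for y unfolding Ysub_def using that by simp

  define jx where "jx x = (LEAST j. (\<beta> ^^ j) x \<in> Y)" for x
  define zx where "zx x = (\<beta> ^^ jx x) x" for x
  have jex: "\<exists>j. (\<beta> ^^ j) x \<in> Y" for x using Nb by blast
  have zY: "zx x \<in> Y" for x unfolding zx_def jx_def by (rule LeastI_ex[OF jex])
  have jmin: "(\<beta> ^^ j) x \<notin> Y" if "j < jx x" for x j
    using not_less_Least[of j "\<lambda>j. (\<beta> ^^ j) x \<in> Y"] that unfolding jx_def by blast
  have xz: "(\<alpha> ^^ jx x) (zx x) = x" for x unfolding zx_def \<beta>_def by (rule pow_inv_pow[OF bij])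
  have jlt: "jx x < rY \<alpha> Y (zx x)" for x
  proof (rule ccontr)
    define r where "r = rY \<alpha> Y (zx x)"
    assume "\<not> jx x < rY \<alpha> Y (zx x)"
    hence rl: "r \<le> jx x" unfolding r_def by simp
    have "(\<beta> ^^ (jx x - r)) x = (\<beta> ^^ (jx x - r)) ((\<alpha> ^^ jx x) (zx x))" using xz by simp
    also have "\<dots> = (\<alpha> ^^ (jx x - (jx x - r))) (zx x)" unfolding \<beta>_def by (rule inv_pow_pow_le[OF bij]) simp
    also have "jx x - (jx x - r) = r" using rl by simp
    finally have "(\<beta> ^^ (jx x - r)) x \<in> Y" using rYY unfolding r_def by simp
    moreover have "jx x - r < jx x" using rY1[of "zx x"] rl unfolding r_def by simp
    ultimately show False using jmin by blast
  qed
  have canon: "jx ((\<alpha> ^^ j) z) = j \<and> zx ((\<alpha> ^^ j) z) = z" if "z \<in> Y" "j < rY \<alpha> Y z" for z j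
  proof -
    have bz: "(\<beta> ^^ j) ((\<alpha> ^^ j) z) = z" unfolding \<beta>_def by (rule inv_pow_pow[OF bij])
    have j: "jx ((\<alpha> ^^ j) z) = j" unfolding jx_def
    proof (rule Least_equality)
      show "(\<beta> ^^ j) ((\<alpha> ^^ j) z) \<in> Y" using bz that(1) by simp
    next
      fix j' assume j': "(\<beta> ^^ j') ((\<alpha> ^^ j) z) \<in> Y"
      show "j \<le> j'"
      proof (rule ccontr)
        assume "\<not> j \<le> j'"
        hence "(\<beta> ^^ j') ((\<alpha> ^^ j) z) = (\<alpha> ^^ (j - j')) z" unfolding \<beta>_def by (intro inv_pow_pow_le[OF bij]) simp
        moreover have "(\<alpha> ^^ (j - j')) z \<notin> Y" using rYmin[of "j - j'" z] \<open>\<not> j \<le> j'\<close> that(2) by simp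
        ultimately show False using j' by simp
      qed
    qed
    thus ?thesis unfolding zx_def using bz by simp
  qed
  define G where "G x = coef \<alpha> L (rY \<alpha> Y (zx x)) m (\<sigma> (rY \<alpha> Y (zx x))) (jx x) (zx x)" for x
  have Gc: "G ((\<alpha> ^^ j) z) = coef \<alpha> L (rY \<alpha> Y z) m (\<sigma> (rY \<alpha> Y z)) j z" if "z \<in> Y" "j < rY \<alpha> Y z" for z j
    using canon[OF that] unfolding G_def by simp

  have ES: "End_section \<alpha> L n (closure (Ysub \<alpha> Y n)) (\<sigma> n)" if "n \<in> Rset \<alpha> Y" for n
    using assms(7) that by blast
  have SD: "subdiag \<alpha> L n m (closure (Ysub \<alpha> Y n)) (\<sigma> n)" if "n \<in> Rset \<alpha> Y" for n
    using assms(10) that by blast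
  have lin: "\<forall>u\<in>Dfib \<alpha> L n y. \<forall>v\<in>Dfib \<alpha> L n y. \<forall>c. \<sigma> n y (\<lambda>l. c * u l + v l) = (\<lambda>l. c * \<sigma> n y u l + \<sigma> n y v l)"
    if "n \<in> Rset \<alpha> Y" "y \<in> closure (Ysub \<alpha> Y n)" for n y
    using ES[OF that(1)] that(2) unfolding End_section_def by blast
  have sdall: "\<forall>v\<in>fib \<alpha> L i y. (if i + m < n then \<sigma> n y v \<in> fib \<alpha> L (i + m) y else \<sigma> n y v = (\<lambda>l. 0))"
    if "n \<in> Rset \<alpha> Y" "y \<in> closure (Ysub \<alpha> Y n)" "i < n" for n y i
  proof -
    have "\<forall>x\<in>closure (Ysub \<alpha> Y n). \<forall>i<n. \<forall>v\<in>fib \<alpha> L i x.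
      (if i + m < n then \<sigma> n x v \<in> fib \<alpha> L (i + m) x else \<sigma> n x v = (\<lambda>l. 0))"
      using SD[OF that(1)] unfolding subdiag_def .
    thus ?thesis using that(2,3) by blast
  qed
  have sdi: "\<forall>v\<in>fib \<alpha> L i y. \<sigma> n y v \<in> fib \<alpha> L (i+m) y"
    if "n \<in> Rset \<alpha> Y" "y \<in> closure (Ysub \<alpha> Y n)" "i + m < n" for n y i
  proof
    fix v assume v: "v \<in> fib \<alpha> L i y"
    have "i < n" using that(3) by simp
    from sdall[OF that(1,2) this] v have "(if i + m < n then \<sigma> n y v \<in> fib \<alpha> L (i + m) y else \<sigma> n y v = (\<lambda>l. 0))"
      by (rule bspec)
    thus "\<sigma> n y v \<in> fib \<alpha> L (i+m) y" using that(3) by simp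
  qed
  have sd0: "\<sigma> n y v = (\<lambda>l. 0)"
    if "n \<in> Rset \<alpha> Y" "y \<in> closure (Ysub \<alpha> Y n)" "i < n" "\<not> i + m < n" "v \<in> fib \<alpha> L i y" for n y i v
  proof -
    from sdall[OF that(1,2,3)] that(5) have "(if i + m < n then \<sigma> n y v \<in> fib \<alpha> L (i + m) y else \<sigma> n y v = (\<lambda>l. 0))"
      by (rule bspec)
    thus ?thesis using that(4) by simp
  qed
  have cspec: "coef \<alpha> L n m (\<sigma> n) i y \<in> fib \<alpha> L m ((\<alpha> ^^ i) y) \<and>
      (\<forall>v\<in>fib \<alpha> L i y. \<sigma> n y v = tens i (coef \<alpha> L n m (\<sigma> n) i y) v)"
    if "n \<in> Rset \<alpha> Y" "y \<in> closure (Ysub \<alpha> Y n)" "i + m < n" for n y i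
    by (rule coef_spec[where \<sigma>="\<sigma> n" and y=y, OF lb that(3) lin[OF that(1,2)] sdi[OF that]])

  have Pm: "G ((\<alpha> ^^ i) y) = coef \<alpha> L n m (\<sigma> n) i y"
    if n: "n \<in> Rset \<alpha> Y" and y: "y \<in> closure (Ysub \<alpha> Y n)" and i: "i < n" for n y i
  proof (cases "y \<in> Ysub \<alpha> Y n")
    case True
    hence "y \<in> Y" "rY \<alpha> Y y = n" by (auto simp: Ysub_def)
    thus ?thesis using Gc[of y i] i by simp
  next
    case False
    hence yb: "y \<in> closure (Ysub \<alpha> Y n) - Ysub \<alpha> Y n" using y by simp
    have "\<forall>n\<in>Rset \<alpha> Y. \<forall>x \<in> closure (Ysub \<alpha> Y n) - Ysub \<alpha> Y n.
     \<exists>ts. set ts \<subseteq> Rset \<alpha> Y \<and> (\<forall>t\<in>set ts. t < n) \<and> sum_list ts = n \<and>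
       (\<forall>s<length ts. (\<alpha> ^^ sum_list (take s ts)) x \<in> Ysub \<alpha> Y (ts ! s)) \<and>
       (\<forall>s<length ts. \<forall>u\<in>Dfib \<alpha> L (ts ! s) ((\<alpha> ^^ sum_list (take s ts)) x).
          \<forall>w\<in>fib \<alpha> L (sum_list (take s ts)) x.
            \<sigma> n x (tens (sum_list (take s ts)) u w) =
            tens (sum_list (take s ts)) (\<sigma> (ts ! s) ((\<alpha> ^^ sum_list (take s ts)) x) u) w)"
      using assms(8) unfolding bdp_def .
    hence "\<exists>ts. set ts \<subseteq> Rset \<alpha> Y \<and> (\<forall>t\<in>set ts. t < n) \<and> sum_list ts = n \<and>
       (\<forall>s<length ts. (\<alpha> ^^ sum_list (take s ts)) y \<in> Ysub \<alpha> Y (ts ! s)) \<and>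
       (\<forall>s<length ts. \<forall>u\<in>Dfib \<alpha> L (ts ! s) ((\<alpha> ^^ sum_list (take s ts)) y).
          \<forall>w\<in>fib \<alpha> L (sum_list (take s ts)) y.
            \<sigma> n y (tens (sum_list (take s ts)) u w) =
            tens (sum_list (take s ts)) (\<sigma> (ts ! s) ((\<alpha> ^^ sum_list (take s ts)) y) u) w)"
      using n yb by blast
    then obtain ts where ts1: "set ts \<subseteq> Rset \<alpha> Y" and ts3: "sum_list ts = n"
      and ts4: "\<forall>s<length ts. (\<alpha> ^^ sum_list (take s ts)) y \<in> Ysub \<alpha> Y (ts ! s)"
      and ts5: "\<forall>s<length ts. \<forall>u\<in>Dfib \<alpha> L (ts ! s) ((\<alpha> ^^ sum_list (take s ts)) y).
          \<forall>w\<in>fib \<alpha> L (sum_list (take s ts)) y.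
            \<sigma> n y (tens (sum_list (take s ts)) u w) =
            tens (sum_list (take s ts)) (\<sigma> (ts ! s) ((\<alpha> ^^ sum_list (take s ts)) y) u) w"
      by (elim exE conjE)
    obtain s where s: "s < length ts" "sum_list (take s ts) \<le> i" "i < sum_list (take s ts) + ts ! s"
      using decomp_index[of i ts] i ts3 by auto
    define R where "R = sum_list (take s ts)"
    define t where "t = ts ! s"
    define z where "z = (\<alpha> ^^ R) y"
    define j where "j = i - R"
    have tR: "t \<in> Rset \<alpha> Y" using ts1 s(1) nth_mem unfolding t_def by blast
    have zt: "z \<in> Ysub \<alpha> Y t" using ts4 s(1) unfolding z_def R_def t_def by blast
    hence zY': "z \<in> Y" and rz: "rY \<alpha> Y z = t" by (auto simp: Ysub_def)
    have zcl: "z \<in> closure (Ysub \<alpha> Y t)" using zt closure_subset by blast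
    have ij: "i = R + j" and jt: "j < t" using s unfolding R_def j_def t_def by auto
    have Rtn: "R + t \<le> n" using sum_take_le[OF s(1)] ts3 unfolding R_def t_def by simp
    have xi: "(\<alpha> ^^ i) y = (\<alpha> ^^ j) z" unfolding z_def ij add.commute[of R j] by (rule pow_add_apply)
    have Geq: "G ((\<alpha> ^^ i) y) = coef \<alpha> L t m (\<sigma> t) j z" using Gc[OF zY', of j] jt rz xi by simp
    have bd: "\<sigma> n y (tens R u w) = tens R (\<sigma> t z u) w" if "u \<in> Dfib \<alpha> L t z" "w \<in> fib \<alpha> L R y" for u w
      using ts5 s(1) that unfolding R_def t_def z_def by blast
    have vsplit: "\<exists>u w. u \<in> fib \<alpha> L j z \<and> w \<in> fib \<alpha> L R y \<and> v = tens R u w" if "v \<in> fib \<alpha> L i y" for v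
    proof -
      have "v \<in> fib \<alpha> L (R + j) y" using that ij by simp
      thus ?thesis using fib_split[OF lb] unfolding z_def by blast
    qed
    show ?thesis
    proof (cases "j + m < t")
      case True
      define c where "c = coef \<alpha> L t m (\<sigma> t) j z"
      have cs1: "c \<in> fib \<alpha> L m ((\<alpha> ^^ j) z)" and cs2: "\<forall>u\<in>fib \<alpha> L j z. \<sigma> t z u = tens j c u"
        using cspec[OF tR zcl True] unfolding c_def by auto
      have all: "\<forall>v\<in>fib \<alpha> L i y. \<sigma> n y v = tens i c v"
      proof
        fix v assume "v \<in> fib \<alpha> L i y"
        then obtain u w where uw: "u \<in> fib \<alpha> L j z" "w \<in> fib \<alpha> L R y" "v = tens R u w" using vsplit by blast
        have uD: "u \<in> Dfib \<alpha> L t z" by (rule fib_Dfib[OF lb jt uw(1)])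
        have "\<sigma> n y v = tens R (\<sigma> t z u) w" using bd[OF uD uw(2)] uw(3) by simp
        also have "\<dots> = tens R (tens j c u) w" using cs2 uw(1) by simp
        also have "\<dots> = tens i c v" unfolding tens_assoc uw(3) ij ..
        finally show "\<sigma> n y v = tens i c v" .
      qed
      have imn: "i + m < n" using True ij Rtn by simp
      have cf: "c \<in> fib \<alpha> L m ((\<alpha> ^^ i) y)" using cs1 xi by simp
      have "coef \<alpha> L n m (\<sigma> n) i y = c" by (rule coef_eq[where \<sigma>="\<sigma> n" and y=y, OF lb imn cf all])
      thus ?thesis using Geq c_def by simp
    next
      case False
      have all: "\<forall>v\<in>fib \<alpha> L i y. \<sigma> n y v = (\<lambda>l. 0)"
      proof
        fix v assume "v \<in> fib \<alpha> L i y"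
        then obtain u w where uw: "u \<in> fib \<alpha> L j z" "w \<in> fib \<alpha> L R y" "v = tens R u w" using vsplit by blast
        have uD: "u \<in> Dfib \<alpha> L t z" by (rule fib_Dfib[OF lb jt uw(1)])
        have "\<sigma> t z u = (\<lambda>l. 0)" by (rule sd0[OF tR zcl jt False uw(1)])
        thus "\<sigma> n y v = (\<lambda>l. 0)" using bd[OF uD uw(2)] uw(3) by simp
      qed
      have "coef \<alpha> L n m (\<sigma> n) i y = (\<lambda>l. 0)" by (rule coef_zero[where \<sigma>="\<sigma> n" and y=y, OF lb all])
      moreover have "coef \<alpha> L t m (\<sigma> t) j z = (\<lambda>l. 0)" using False by (simp add: coef_def)
      ultimately show ?thesis using Geq by simp
    qed
  qed

  have Gfib: "G x \<in> fib \<alpha> L m x" for x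
  proof -
    define z where "z = zx x"
    define t where "t = rY \<alpha> Y z"
    define j where "j = jx x"
    have z1: "z \<in> Y" unfolding z_def by (rule zY)
    have tR: "t \<in> Rset \<alpha> Y" unfolding t_def by (rule RsetI[OF z1])
    have zcl: "z \<in> closure (Ysub \<alpha> Y t)" using YsubI[OF z1] closure_subset unfolding t_def by blast
    have G: "G x = coef \<alpha> L t m (\<sigma> t) j z" unfolding G_def z_def t_def j_def ..
    have xe: "(\<alpha> ^^ j) z = x" unfolding z_def j_def by (rule xz)
    show ?thesis
    proof (cases "j + m < t")
      case True
      have "coef \<alpha> L t m (\<sigma> t) j z \<in> fib \<alpha> L m ((\<alpha> ^^ j) z)" using cspec[OF tR zcl True] by (rule conjunct1)
      thus ?thesis using G xe by simp
    next
      case False thus ?thesis using G zero_in_fib[OF lb] by (simp add: coef_def)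
    qed
  qed
  have Gvan: "G x = (\<lambda>l. 0)" if "j \<in> {1..m}" "(\<alpha> ^^ j) x \<in> Y" for j x
  proof -
    define z where "z = zx x"
    define t where "t = rY \<alpha> Y z"
    define k where "k = jx x"
    have G: "G x = coef \<alpha> L t m (\<sigma> t) k z" unfolding G_def z_def t_def k_def ..
    have xe: "(\<alpha> ^^ k) z = x" unfolding z_def k_def by (rule xz)
    show ?thesis
    proof (cases "k + m < t")
      case True
      have "(\<alpha> ^^ (j + k)) z = (\<alpha> ^^ j) x" unfolding pow_add_apply xe ..
      moreover have "(\<alpha> ^^ (j + k)) z \<notin> Y" using rYmin[of "j + k" z] that(1) True unfolding t_def by auto
      ultimately show ?thesis using that(2) by simp
    next
      case False thus ?thesis using G by (simp add: coef_def)
    qed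
  qed
  have Gcont: "cont_sec UNIV G"
    unfolding cont_sec_def
  proof
    fix l
    define I where "I = Sigma (Rset \<alpha> Y) (\<lambda>n. {..<n})"
    define Pc where "Pc = (\<lambda>p. (\<alpha> ^^ snd p) ` closure (Ysub \<alpha> Y (fst p)))"
    have fI: "finite I" unfolding I_def using finR by (intro finite_SigmaI) auto
    have cov: "\<Union> (Pc ` I) = UNIV"
    proof (rule set_eqI, rule iffI)
      fix x :: 'a
      have z1: "zx x \<in> Y" by (rule zY)
      have "(rY \<alpha> Y (zx x), jx x) \<in> I" unfolding I_def using RsetI[OF z1] jlt[of x] by simp
      moreover have "x \<in> Pc (rY \<alpha> Y (zx x), jx x)"
      proof -
        have "zx x \<in> closure (Ysub \<alpha> Y (rY \<alpha> Y (zx x)))" using YsubI[OF z1] closure_subset by blast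
        hence "(\<alpha> ^^ jx x) (zx x) \<in> (\<alpha> ^^ jx x) ` closure (Ysub \<alpha> Y (rY \<alpha> Y (zx x)))" by (rule imageI)
        thus ?thesis unfolding Pc_def xz by simp
      qed
      ultimately show "x \<in> \<Union> (Pc ` I)" by blast
    qed simp
    have clo: "closed (Pc p)" if "p \<in> I" for p
    proof -
      have "compact (UNIV \<inter> closure (Ysub \<alpha> Y (fst p)))" by (rule compact_Int_closed[OF assms(1) closed_closure])
      hence cp: "compact (closure (Ysub \<alpha> Y (fst p)))" by simp
      have "continuous_on (closure (Ysub \<alpha> Y (fst p))) (\<alpha> ^^ snd p)"
        using ac continuous_on_subset by blast
      hence "compact (Pc p)" unfolding Pc_def by (rule compact_continuous_image[OF _ cp])
      thus ?thesis by (rule compact_imp_closed)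
    qed
    have cP: "continuous_on (Pc p) (\<lambda>x. G x l)" if "p \<in> I" for p
    proof -
      obtain n i where p: "p = (n, i)" by (cases p)
      have n: "n \<in> Rset \<alpha> Y" and i: "i < n" using that unfolding p I_def by auto
      let ?S = "closure (Ysub \<alpha> Y n)"
      have c1: "continuous_on ?S (\<lambda>y. coef \<alpha> L n m (\<sigma> n) i y l)"
        by (rule coef_cont[OF lb ac ES[OF n] _ i]) (use sdi[OF n] in blast)
      have bsub: "(\<beta> ^^ i) ` (\<alpha> ^^ i) ` ?S \<subseteq> ?S"
        unfolding \<beta>_def using inv_pow_pow[OF bij] by auto
      have c2: "continuous_on ((\<alpha> ^^ i) ` ?S) (\<lambda>x. coef \<alpha> L n m (\<sigma> n) i ((\<beta> ^^ i) x) l)"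
        by (rule continuous_on_compose2[OF c1 continuous_on_subset[OF bc subset_UNIV] bsub])
      have "continuous_on ((\<alpha> ^^ i) ` ?S) (\<lambda>x. G x l)"
      proof (rule continuous_on_eq[OF c2])
        fix x assume "x \<in> (\<alpha> ^^ i) ` ?S"
        then obtain y where y: "y \<in> ?S" "x = (\<alpha> ^^ i) y" by blast
        have "(\<beta> ^^ i) x = y" unfolding y(2) \<beta>_def by (rule inv_pow_pow[OF bij])
        thus "coef \<alpha> L n m (\<sigma> n) i ((\<beta> ^^ i) x) l = G x l" using Pm[OF n y(1) i] y(2) by simp
      qed
      thus ?thesis unfolding Pc_def p by simp
    qed
    have "continuous_on (\<Union> (Pc ` I)) (\<lambda>x. G x l)" by (rule continuous_on_closed_Union[OF fI clo cP])
    thus "continuous_on UNIV (\<lambda>x. G x l)" unfolding cov .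
  qed
  have P3: "\<forall>n\<in>Rset \<alpha> Y. \<forall>i<n. \<forall>y\<in>closure (Ysub \<alpha> Y n). G ((\<alpha> ^^ i) y) = coef \<alpha> L n m (\<sigma> n) i y"
    using Pm by blast
  have P4: "1 \<le> m \<longrightarrow> (\<forall>j\<in>{1..m}. \<forall>x. (\<alpha> ^^ j) x \<in> Y \<longrightarrow> G x = (\<lambda>l. 0))"
    using Gvan by blast
  show ?thesis using Gcont Gfib P3 P4 by blast
qed

end
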